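(* Pseudo-rotations are generic in $\overline{\mathcal{O}}^{\infty}(\mathbb{T}^2)$ and in $\overline{\mathcal{O}_\mu}^{\infty}(\mathbb{T}^2)$.
   Context: $\overline{\mathcal{O}}^{\infty}(\mathbb{T}^2)$ is the $C^\infty$-closure of $\{h\circ R_\theta\circ h^{-1}: h\in\mathrm{Diff}^\infty(\mathbb{T}^2),\theta\in\mathbb{T}^2\}$ where $R_\theta(x)=x+\theta$ on $\mathbb{T}^2=\mathbb{R}^2/\mathbb{Z}^2$, with the $C^\infty$ metric; $\overline{\mathcal{O}_\mu}^{\infty}(\mathbb{T}^2)$ is the same with $h$ area-preserving. Generic means holding on a countable intersection of open dense subsets. For $f$ a torus homeomorphism homotopic to the identity with lift $\tilde f$, its rotation set is $\rho(\tilde f)=\lim_{n\to\infty}\tilde f^n(D)/n$ (Hausdorff limit, $D$ a fundamental domain of $\mathbb{Z}^2$); $f$ is a pseudo-rotation if its rotation set is a single vector. *)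

theory Defs
  imports "HOL-Analysis.Analysis"
begin

typedef torus = "{x :: real^2. \<forall>i. 0 \<le> x $ i \<and> x $ i < 1}"
  by (rule exI[of _ 0]) simp

definition proj :: "real^2 \<Rightarrow> torus" where
  "proj x = Abs_torus (\<chi> i. frac (x $ i))"

definition lattice :: "(real^2) set" where
  "lattice = {k. \<forall>i. k $ i \<in> \<int>}"

definition rot :: "real^2 \<Rightarrow> torus \<Rightarrow> torus" where
  "rot \<theta> p = proj (Rep_torus p + \<theta>)"

definition tdist :: "torus \<Rightarrow> torus \<Rightarrow> real" where
  "tdist p q = Inf {norm (x - y) | x y. proj x = p \<and> proj y = q}"

text \<open>pd ds F is the iterated partial derivative along the coordinate
  directions listed in ds (innermost derivative last in the list).\<close>
fun pd :: "2 list \<Rightarrow> (real^2 \<Rightarrow> real^2) \<Rightarrow> real^2 \<Rightarrow> real^2" where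
  "pd [] F = F"
| "pd (i # ds) F = (\<lambda>x. vector_derivative (\<lambda>t. pd ds F (x + t *\<^sub>R axis i 1)) (at 0))"

definition smooth :: "(real^2 \<Rightarrow> real^2) \<Rightarrow> bool" where
  "smooth F \<longleftrightarrow> (\<forall>ds. continuous_on UNIV (pd ds F)) \<and>
     (\<forall>ds i x. (\<lambda>t. pd ds F (x + t *\<^sub>R axis i 1)) differentiable (at 0))"

definition is_lift :: "(real^2 \<Rightarrow> real^2) \<Rightarrow> (torus \<Rightarrow> torus) \<Rightarrow> bool" where
  "is_lift F f \<longleftrightarrow> (\<forall>x. proj (F x) = f (proj x))"

definition smooth_tmap :: "(torus \<Rightarrow> torus) \<Rightarrow> bool" where
  "smooth_tmap f \<longleftrightarrow> (\<exists>F. smooth F \<and> is_lift F f)"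

definition Diff :: "(torus \<Rightarrow> torus) set" where
  "Diff = {f. bij f \<and> smooth_tmap f \<and> smooth_tmap (inv f)}"

text \<open>A chosen smooth lift (all smooth lifts differ by a constant in Z^2,
  so derivatives of order >= 1 do not depend on the choice).\<close>
definition lift :: "(torus \<Rightarrow> torus) \<Rightarrow> real^2 \<Rightarrow> real^2" where
  "lift f = (SOME F. smooth F \<and> is_lift F f)"

definition jac :: "(real^2 \<Rightarrow> real^2) \<Rightarrow> real^2 \<Rightarrow> real^2^2" where
  "jac F x = (\<chi> i j. pd [j] F x $ i)"

definition Diff_mu :: "(torus \<Rightarrow> torus) set" where
  "Diff_mu = {h \<in> Diff. \<forall>x. \<bar>det (jac (lift h) x)\<bar> = 1}"

definition dk :: "nat \<Rightarrow> (torus \<Rightarrow> torus) \<Rightarrow> (torus \<Rightarrow> torus) \<Rightarrow> real" where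
  "dk k f g = Sup ({Sup (range (\<lambda>p. tdist (f p) (g p)))} \<union>
      {Sup (range (\<lambda>x. norm (pd ds (lift f) x - pd ds (lift g) x))) | ds.
          1 \<le> length ds \<and> length ds \<le> k})"

definition dCk :: "nat \<Rightarrow> (torus \<Rightarrow> torus) \<Rightarrow> (torus \<Rightarrow> torus) \<Rightarrow> real" where
  "dCk k f g = max (dk k f g) (dk k (inv f) (inv g))"

definition dinf :: "(torus \<Rightarrow> torus) \<Rightarrow> (torus \<Rightarrow> torus) \<Rightarrow> real" where
  "dinf f g = (\<Sum>k. (1/2) ^ k * min 1 (dCk k f g))"

definition dinf_open :: "(torus \<Rightarrow> torus) set \<Rightarrow> bool" where
  "dinf_open U \<longleftrightarrow> U \<subseteq> Diff \<and>
     (\<forall>f\<in>U. \<exists>r>0. \<forall>g\<in>Diff. dinf f g < r \<longrightarrow> g \<in> U)"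

lemma istopology_dinf_open: "istopology dinf_open"
  unfolding istopology_def
proof (rule conjI; intro allI impI)
  fix S T assume S: "dinf_open S" and T: "dinf_open T"
  show "dinf_open (S \<inter> T)"
    unfolding dinf_open_def
  proof (intro conjI ballI)
    show "S \<inter> T \<subseteq> Diff" using S unfolding dinf_open_def by blast
  next
    fix f assume f: "f \<in> S \<inter> T"
    obtain r1 where r1: "r1 > 0" "\<forall>g\<in>Diff. dinf f g < r1 \<longrightarrow> g \<in> S"
      using f S unfolding dinf_open_def by blast
    obtain r2 where r2: "r2 > 0" "\<forall>g\<in>Diff. dinf f g < r2 \<longrightarrow> g \<in> T"
      using f T unfolding dinf_open_def by blast
    show "\<exists>r>0. \<forall>g\<in>Diff. dinf f g < r \<longrightarrow> g \<in> S \<inter> T"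
      using r1 r2 by (intro exI[of _ "min r1 r2"]) auto
  qed
next
  fix K assume K: "\<forall>S\<in>K. dinf_open S"
  show "dinf_open (\<Union>K)"
    unfolding dinf_open_def
  proof (intro conjI ballI)
    show "\<Union>K \<subseteq> Diff" using K unfolding dinf_open_def by blast
  next
    fix f assume "f \<in> \<Union>K"
    then obtain S where "S \<in> K" "f \<in> S" by blast
    then obtain r where "r > 0" "\<forall>g\<in>Diff. dinf f g < r \<longrightarrow> g \<in> S"
      using K unfolding dinf_open_def by blast
    then show "\<exists>r>0. \<forall>g\<in>Diff. dinf f g < r \<longrightarrow> g \<in> \<Union>K"
      using \<open>S \<in> K\<close> by blast
  qed
qed

definition Diff_top :: "(torus \<Rightarrow> torus) topology" where
  "Diff_top = topology dinf_open"

definition O_closure :: "(torus \<Rightarrow> torus) set" where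
  "O_closure = Diff_top closure_of {h \<circ> rot \<theta> \<circ> inv h | h \<theta>. h \<in> Diff}"

definition O_mu_closure :: "(torus \<Rightarrow> torus) set" where
  "O_mu_closure = Diff_top closure_of {h \<circ> rot \<theta> \<circ> inv h | h \<theta>. h \<in> Diff_mu}"

definition hausdorff_dist :: "(real^2) set \<Rightarrow> (real^2) set \<Rightarrow> real" where
  "hausdorff_dist A B = max (SUP a\<in>A. infdist a B) (SUP b\<in>B. infdist b A)"

definition fund_dom :: "(real^2) set" where
  "fund_dom = cbox 0 1"

definition rotation_set :: "(real^2 \<Rightarrow> real^2) \<Rightarrow> (real^2) set" where
  "rotation_set F = (THE R. compact R \<and> R \<noteq> {} \<and>
     (\<lambda>n. hausdorff_dist ((\<lambda>x. (1 / real n) *\<^sub>R x) ` ((F ^^ n) ` fund_dom)) R)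
        \<longlonglongrightarrow> 0)"

text \<open>f is a homeomorphism homotopic to the identity (i.e. has a continuous lift
  commuting with the integer translations), and the rotation set of such a lift
  is a single vector.\<close>
definition pseudo_rotation :: "(torus \<Rightarrow> torus) \<Rightarrow> bool" where
  "pseudo_rotation f \<longleftrightarrow> bij f \<and>
     (\<exists>F. continuous_on UNIV F \<and> is_lift F f \<and>
        (\<forall>x k. k \<in> lattice \<longrightarrow> F (x + k) = F x + k) \<and>
        (\<exists>v. rotation_set F = {v}))"

definition generic_in :: "'a topology \<Rightarrow> ('a \<Rightarrow> bool) \<Rightarrow> bool" where
  "generic_in X P \<longleftrightarrow> (\<exists>U :: nat \<Rightarrow> 'a set.
      (\<forall>n. openin X (U n) \<and> X closure_of (U n) = topspace X) \<and>
      (\<Inter>n. U n) \<subseteq> {x. P x})"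

end

theory Submission imports Defs begin

lemma lattice_iff: "k \<in> lattice \<longleftrightarrow> (\<forall>i. k $ i \<in> \<int>)"
  by (simp add: lattice_def)

lemma lattice_add[intro]: "a \<in> lattice \<Longrightarrow> b \<in> lattice \<Longrightarrow> a + b \<in> lattice"
  by (simp add: lattice_def)
lemma lattice_diff[intro]: "a \<in> lattice \<Longrightarrow> b \<in> lattice \<Longrightarrow> a - b \<in> lattice"
  by (simp add: lattice_def)
lemma lattice_uminus[intro]: "a \<in> lattice \<Longrightarrow> - a \<in> lattice"
  by (simp add: lattice_def)
lemma lattice_zero[simp,intro]: "0 \<in> lattice"
  by (simp add: lattice_def)
lemma lattice_nat_scale[intro]: "a \<in> lattice \<Longrightarrow> real m *\<^sub>R a \<in> lattice"
  by (simp add: lattice_def)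

lemma frac_eq_iff: "frac (x::real) = frac y \<longleftrightarrow> x - y \<in> \<int>"
proof
  assume "frac x = frac y"
  then have "x - y = of_int (\<lfloor>x\<rfloor> - \<lfloor>y\<rfloor>)" by (simp add: frac_def)
  then show "x - y \<in> \<int>" by simp
next
  assume "x - y \<in> \<int>"
  then have "frac ((x - y) + y) = frac y" by (rule frac_add_int_left)
  then show "frac x = frac y" by simp
qed

lemma Rep_torus_range: "0 \<le> Rep_torus p $ i \<and> Rep_torus p $ i < 1"
  using Rep_torus[of p] by auto

lemma proj_eq_iff: "proj x = proj y \<longleftrightarrow> x - y \<in> lattice"
proof -
  have "proj x = proj y \<longleftrightarrow> (\<chi> i. frac (x $ i)) = (\<chi> i. frac (y $ i))"
    unfolding proj_def
    by (rule Abs_torus_inject) (auto simp: frac_lt_1)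
  also have "\<dots> \<longleftrightarrow> (\<forall>i. frac (x $ i) = frac (y $ i))"
    by (simp add: vec_eq_iff)
  also have "\<dots> \<longleftrightarrow> x - y \<in> lattice"
    by (simp add: lattice_def frac_eq_iff)
  finally show ?thesis .
qed

lemma proj_Rep: "proj (Rep_torus p) = p"
proof -
  have "(\<chi> i. frac (Rep_torus p $ i)) = Rep_torus p"
    using Rep_torus_range[of p] by (simp add: vec_eq_iff frac_unique_iff)
  then show ?thesis unfolding proj_def by (simp add: Rep_torus_inverse)
qed

lemma proj_add_lattice: "k \<in> lattice \<Longrightarrow> proj (x + k) = proj x"
  by (simp add: proj_eq_iff)

lemma lattice_norm_ge1: assumes "k \<in> lattice" "k \<noteq> 0" shows "norm k \<ge> 1"
proof -
  obtain i where i: "k $ i \<noteq> 0" using assms(2) by (auto simp: vec_eq_iff)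
  obtain n where n: "k $ i = of_int n" using assms(1) by (auto simp: lattice_def elim!: Ints_cases)
  have "n \<noteq> 0" using i n by auto
  then have "\<bar>k $ i\<bar> \<ge> 1" using n by simp
  then show ?thesis using component_le_norm_cart[of k i] by linarith
qed

lemma lattice_small_zero: "k \<in> lattice \<Longrightarrow> norm k < 1 \<Longrightarrow> k = 0"
  using lattice_norm_ge1 by force

lemma norm_le_2: fixes x :: "real^2" assumes "\<forall>i. 0 \<le> x $ i \<and> x $ i \<le> (1::real)" shows "norm x \<le> 2"
proof -
  have "norm x \<le> (\<Sum>i\<in>UNIV. \<bar>x $ i\<bar>)" by (rule norm_le_l1_cart)
  also have "\<dots> = \<bar>x $ 1\<bar> + \<bar>x $ 2\<bar>" by (simp add: sum_2)
  also have "\<dots> \<le> 2" using assms[rule_format, of 1] assms[rule_format, of 2] by simp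
  finally show ?thesis .
qed

lemma norm_Rep_le: "norm (Rep_torus p) \<le> 2"
  using Rep_torus_range[of p] by (intro norm_le_2) (auto intro: less_imp_le)

definition fl :: "real^2 \<Rightarrow> real^2" where
  "fl x = (\<chi> i. of_int \<lfloor>x $ i\<rfloor>)"

lemma fl_lattice: "fl x \<in> lattice"
  by (simp add: fl_def lattice_def)

lemma fl_diff_range: "0 \<le> (x - fl x) $ i \<and> (x - fl x) $ i < 1"
  by (simp add: fl_def) linarith

lemma fl_diff_norm: "norm (x - fl x) \<le> 2"
  using fl_diff_range[of x] by (intro norm_le_2) (auto intro: less_imp_le)

lemma fl_diff_cbox: "x - fl x \<in> cbox 0 1"
  using fl_diff_range[of x] by (auto simp: mem_box_cart intro: less_imp_le)


lemma lattice_const: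
  fixes d :: "real^2 \<Rightarrow> real^2"
  assumes cont: "continuous_on UNIV d" and r: "r \<le> 1/2"
    and near: "\<And>z. \<exists>k\<in>lattice. norm (d z - k) < r"
  shows "\<exists>k\<in>lattice. \<forall>z. norm (d z - k) < r"
proof -
  obtain k0 where k0: "k0 \<in> lattice" "norm (d 0 - k0) < r" using near[of 0] by blast
  define S where "S = {z. norm (d z - k0) < r}"
  define T where "T = (\<Union>k\<in>lattice - {k0}. {z. norm (d z - k) < r})"
  have oS: "open S" unfolding S_def
    by (intro open_Collect_less continuous_on_norm continuous_on_diff cont continuous_on_const)
  have "open {z. norm (d z - k) < r}" for k
    by (intro open_Collect_less continuous_on_norm continuous_on_diff cont continuous_on_const)
  then have oT: "open T" unfolding T_def by blast
  have cov: "UNIV \<subseteq> S \<union> T"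
  proof
    fix z
    obtain k where "k \<in> lattice" "norm (d z - k) < r" using near[of z] by blast
    then show "z \<in> S \<union> T" unfolding S_def T_def by (cases "k = k0") auto
  qed
  have disj: "S \<inter> T = {}"
  proof (rule ccontr)
    assume "S \<inter> T \<noteq> {}"
    then obtain z k where z: "norm (d z - k0) < r" "k \<in> lattice" "k \<noteq> k0" "norm (d z - k) < r"
      unfolding S_def T_def by blast
    have "k - k0 = (d z - k0) - (d z - k)" by simp
    then have "norm (k - k0) \<le> norm (d z - k) + norm (d z - k0)"
      using norm_triangle_ineq4[of "d z - k0" "d z - k"] by simp
    then have "norm (k - k0) < 1" using z r by linarith
    then have "k - k0 = 0" using lattice_small_zero z k0 by blast
    then show False using z by simp
  qed
  have "0 \<in> S" using k0 unfolding S_def by simp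
  have "T = {}"
    using connected_UNIV[unfolded connected_def] oS oT cov disj \<open>0 \<in> S\<close> by blast
  then have "\<forall>z. z \<in> S" using cov by blast
  then show ?thesis using k0 unfolding S_def by blast
qed

lemma lattice_valued_const:
  fixes d :: "real^2 \<Rightarrow> real^2"
  assumes cont: "continuous_on UNIV d" and lat: "\<And>z. d z \<in> lattice"
  shows "\<exists>k\<in>lattice. \<forall>z. d z = k"
proof -
  have "\<exists>k\<in>lattice. norm (d z - k) < 1/2" for z
    using lat[of z] by (intro bexI[of _ "d z"]) auto
  then obtain k where k: "k \<in> lattice" "\<forall>z. norm (d z - k) < 1/2"
    using lattice_const[OF cont, of "1/2"] by auto
  have "d z = k" for z
  proof -
    have "d z - k \<in> lattice" using k lat[of z] by auto
    moreover have "norm (d z - k) < 1" using k(2)[rule_format, of z] by linarith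
    ultimately have "d z - k = 0" using lattice_small_zero[of "d z - k"] by blast
    then show ?thesis by simp
  qed
  then show ?thesis using k by blast
qed

lemma lift_diff_lattice: "is_lift F f \<Longrightarrow> proj x = proj y \<Longrightarrow> F x - F y \<in> lattice"
  by (simp add: is_lift_def proj_eq_iff[symmetric])

lemma lift_transl:
  assumes cont: "continuous_on UNIV H" and lift: "is_lift H h" and j: "j \<in> lattice"
  shows "\<exists>l\<in>lattice. \<forall>y. H (y + j) = H y + l"
proof -
  have "\<exists>l\<in>lattice. \<forall>y. H (y + j) - H y = l"
  proof (rule lattice_valued_const)
    show "continuous_on UNIV (\<lambda>y. H (y + j) - H y)"
      by (intro continuous_on_diff continuous_on_compose2[OF cont] cont continuous_on_add
          continuous_on_id continuous_on_const) auto
    show "H (y + j) - H y \<in> lattice" for y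
      by (rule lift_diff_lattice[OF lift]) (simp add: proj_add_lattice j)
  qed
  then obtain l where "l \<in> lattice" "\<forall>y. H (y + j) - H y = l" by blast
  then show ?thesis by (metis add.commute diff_add_cancel)
qed

lemma lifts_differ_const:
  assumes "continuous_on UNIV F1" "is_lift F1 f" "continuous_on UNIV F2" "is_lift F2 f"
  shows "\<exists>c\<in>lattice. \<forall>x. F1 x = F2 x + c"
proof -
  have "\<exists>c\<in>lattice. \<forall>x. F1 x - F2 x = c"
  proof (rule lattice_valued_const)
    show "continuous_on UNIV (\<lambda>x. F1 x - F2 x)"
      using assms by (intro continuous_on_diff) auto
    show "F1 x - F2 x \<in> lattice" for x
      using assms by (simp add: is_lift_def proj_eq_iff[symmetric])
  qed
  then obtain c where "c \<in> lattice" "\<forall>x. F1 x - F2 x = c" by blast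
  then show ?thesis by (metis add.commute diff_add_cancel)
qed


lemma fl_decomp: "x = (x - fl x) + fl x"
  by simp

lemma periodic_bounded:
  fixes p :: "real^2 \<Rightarrow> real^2"
  assumes cont: "continuous_on UNIV p" and per: "\<And>x k. k \<in> lattice \<Longrightarrow> p (x + k) = p x"
  shows "\<exists>B. \<forall>x. norm (p x) \<le> B"
proof -
  have "compact (p ` cbox 0 1)"
    by (rule compact_continuous_image) (auto intro: continuous_on_subset[OF cont])
  then obtain B where B: "\<forall>y\<in>p ` cbox 0 1. norm y \<le> B"
    using compact_imp_bounded bounded_iff by metis
  have "norm (p x) \<le> B" for x
  proof -
    have "p x = p ((x - fl x) + fl x)" by simp
    also have "\<dots> = p (x - fl x)" by (rule per[OF fl_lattice])
    finally show ?thesis using B fl_diff_cbox[of x] by auto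
  qed
  then show ?thesis by blast
qed

lemma periodic_ucont:
  fixes p :: "real^2 \<Rightarrow> real^2"
  assumes cont: "continuous_on UNIV p" and per: "\<And>x k. k \<in> lattice \<Longrightarrow> p (x + k) = p x"
    and e: "e > 0"
  shows "\<exists>\<delta>>0. \<forall>x y. dist x y < \<delta> \<longrightarrow> dist (p x) (p y) < e"
proof -
  have "uniformly_continuous_on (cball 0 4) p"
    by (rule compact_uniformly_continuous) (auto intro: continuous_on_subset[OF cont])
  then obtain d0 where d0: "d0 > 0"
    "\<forall>x\<in>cball 0 4. \<forall>x'\<in>cball 0 4. dist x' x < d0 \<longrightarrow> dist (p x') (p x) < e"
    unfolding uniformly_continuous_on_def using e by metis
  show ?thesis
  proof (intro exI[of _ "min d0 1"] conjI allI impI)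
    show "min d0 1 > 0" using d0 by simp
    fix x y :: "real^2" assume xy: "dist x y < min d0 1"
    define a where "a = x - fl x"
    define b where "b = y - fl x"
    have na: "norm a \<le> 2" unfolding a_def by (rule fl_diff_norm)
    have dab: "dist a b = dist x y" unfolding a_def b_def dist_norm by (simp add: algebra_simps)
    have "norm b \<le> norm a + dist a b"
      by (metis dist_norm norm_minus_commute norm_triangle_sub add.commute)
    then have nb: "norm b \<le> 3" using na dab xy by linarith
    have "p x = p (a + fl x)" unfolding a_def by simp
    also have "\<dots> = p a" by (rule per[OF fl_lattice])
    finally have px: "p x = p a" .
    have "p y = p (b + fl x)" unfolding b_def by simp
    also have "\<dots> = p b" by (rule per[OF fl_lattice])
    finally have py: "p y = p b" .
    have "dist (p a) (p b) < e"
      using d0(2)[rule_format, of b a] na nb dab xy by (simp add: dist_commute)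
    then show "dist (p x) (p y) < e" using px py by simp
  qed
qed

lemma Q_bounded:
  fixes H :: "real^2 \<Rightarrow> real^2"
  assumes cont: "continuous_on UNIV H"
    and tr: "\<And>j. j \<in> lattice \<Longrightarrow> \<exists>l. \<forall>y. H (y + j) = H y + l"
  shows "\<exists>C. \<forall>y u. norm (H (y + u) - H y - H u + H 0) \<le> C"
proof -
  define q where "q z = H (fst z + snd z) - H (fst z) - H (snd z) + H 0" for z :: "(real^2) \<times> (real^2)"
  have cq: "continuous_on UNIV q" unfolding q_def
    by (intro continuous_on_add continuous_on_diff continuous_on_compose2[OF cont]
        continuous_on_fst continuous_on_snd continuous_on_id continuous_on_const) auto
  have "compact (q ` (cbox 0 1 \<times> cbox 0 1))"
    by (rule compact_continuous_image) (auto intro: continuous_on_subset[OF cq] compact_Times)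
  then obtain C where C: "\<forall>w\<in>q ` (cbox 0 1 \<times> cbox 0 1). norm w \<le> C"
    using compact_imp_bounded bounded_iff by metis
  have q1: "q (y + j, u) = q (y, u)" if jl: "j \<in> lattice" for y u j
  proof -
    obtain l where l: "\<forall>y. H (y + j) = H y + l" using tr[OF jl] by blast
    have "H (y + j + u) = H (y + u) + l" using l[rule_format, of "y + u"] by (simp add: algebra_simps)
    then show ?thesis unfolding q_def using l by simp
  qed
  have q2: "q (y, u + j) = q (y, u)" if jl: "j \<in> lattice" for y u j
  proof -
    obtain l where l: "\<forall>y. H (y + j) = H y + l" using tr[OF jl] by blast
    have "H (y + (u + j)) = H (y + u) + l" using l[rule_format, of "y + u"] by (simp add: algebra_simps)
    then show ?thesis unfolding q_def using l by simp
  qed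
  have "norm (q (y, u)) \<le> C" for y u
  proof -
    have "q (y, u) = q ((y - fl y) + fl y, (u - fl u) + fl u)" by simp
    also have "\<dots> = q (y - fl y, (u - fl u) + fl u)" by (rule q1[OF fl_lattice])
    also have "\<dots> = q (y - fl y, u - fl u)" by (rule q2[OF fl_lattice])
    finally show ?thesis using C fl_diff_cbox by auto
  qed
  then show ?thesis unfolding q_def by auto
qed


lemma fund_dom_norm: "x \<in> fund_dom \<Longrightarrow> norm x \<le> 2"
  unfolding fund_dom_def by (intro norm_le_2) (auto simp: mem_box_cart)

lemma fund_dom_ne: "0 \<in> fund_dom"
  unfolding fund_dom_def by (auto simp: mem_box_cart)

lemma disp_bounded:
  fixes F :: "real^2 \<Rightarrow> real^2"
  assumes cont: "continuous_on UNIV F" and eqv: "\<And>x k. k \<in> lattice \<Longrightarrow> F (x + k) = F x + k"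
  shows "\<exists>C. C \<ge> 0 \<and> (\<forall>y. norm (F y - y) \<le> C)"
proof -
  have c2: "continuous_on UNIV (\<lambda>x. F x - x)"
    using cont by (intro continuous_on_diff continuous_on_id)
  have p2: "F (x + k) - (x + k) = F x - x" if "k \<in> lattice" for x k
    using eqv[OF that, of x] by simp
  obtain B where "\<forall>x. norm (F x - x) \<le> B"
    using periodic_bounded[of "\<lambda>x. F x - x", OF c2 p2] by blast
  moreover then have "B \<ge> 0" using norm_ge_zero[of "F 0 - 0"] order_trans by blast
  ultimately show ?thesis by blast
qed

lemma funpow_disp:
  fixes F :: "real^2 \<Rightarrow> real^2"
  assumes "\<And>y. norm (F y - y) \<le> C"
  shows "norm ((F ^^ s) y - y) \<le> real s * C"
proof (induction s)
  case 0 then show ?case by simp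
next
  case (Suc s)
  have "(F ^^ Suc s) y - y = (F ((F ^^ s) y) - (F ^^ s) y) + ((F ^^ s) y - y)" by simp
  then have "norm ((F ^^ Suc s) y - y) \<le> norm (F ((F ^^ s) y) - (F ^^ s) y) + norm ((F ^^ s) y - y)"
    by (metis norm_triangle_ineq)
  also have "\<dots> \<le> C + real s * C" using assms Suc by (intro add_mono) auto
  finally show ?case by (simp add: algebra_simps)
qed

lemma funpow_mult_disp:
  fixes F :: "real^2 \<Rightarrow> real^2"
  assumes "\<And>x. norm ((F ^^ m) x - x - W) \<le> e"
  shows "norm ((F ^^ (q * m)) x - x - real q *\<^sub>R W) \<le> real q * e"
proof (induction q)
  case 0 then show ?case by simp
next
  case (Suc q)
  define y where "y = (F ^^ (q * m)) x"
  have "(F ^^ (Suc q * m)) x = (F ^^ m) y"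
    unfolding y_def by (simp add: funpow_add)
  then have "(F ^^ (Suc q * m)) x - x - real (Suc q) *\<^sub>R W = ((F ^^ m) y - y - W) + (y - x - real q *\<^sub>R W)"
    by (simp add: algebra_simps)
  then have "norm ((F ^^ (Suc q * m)) x - x - real (Suc q) *\<^sub>R W) \<le> norm ((F ^^ m) y - y - W) + norm (y - x - real q *\<^sub>R W)"
    by (metis norm_triangle_ineq)
  also have "\<dots> \<le> e + real q * e" using assms Suc unfolding y_def by (intro add_mono) auto
  finally show ?case by (simp add: algebra_simps)
qed


lemma approx_w:
  fixes F :: "real^2 \<Rightarrow> real^2"
  assumes cont: "continuous_on UNIV F" and eqv: "\<And>x k. k \<in> lattice \<Longrightarrow> F (x + k) = F x + k"
    and cond: "\<forall>\<epsilon>>0. \<exists>m\<ge>1. \<exists>W. \<forall>x. norm ((F ^^ m) x - x - W) \<le> \<epsilon> * real m"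
    and e: "e > 0"
  shows "\<exists>w N0. \<forall>N\<ge>N0. \<forall>x\<in>fund_dom. norm ((1 / real N) *\<^sub>R (F ^^ N) x - w) \<le> e"
proof -
  obtain C1 where C1: "C1 \<ge> 0" "\<And>y. norm (F y - y) \<le> C1"
    using disp_bounded[OF cont eqv] by blast
  obtain m W where mW: "m \<ge> 1" "\<And>x. norm ((F ^^ m) x - x - W) \<le> (e/2) * real m"
    using cond e by (meson half_gt_zero)
  define K where "K = real m * C1 + 2 + norm W"
  have K0: "K \<ge> 0" unfolding K_def using C1 by simp
  define N0 where "N0 = nat \<lceil>2 * K / e\<rceil> + 1"
  show ?thesis
  proof (intro exI[of _ "(1 / real m) *\<^sub>R W"] exI[of _ N0] allI impI ballI)
    fix N x assume N: "N \<ge> N0" and x: "x \<in> fund_dom"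
    define n where "n = real N"
    have n0: "n > 0" unfolding n_def using N N0_def by simp
    have "real N0 \<ge> 2 * K / e" unfolding N0_def by linarith
    then have "n \<ge> 2 * K / e" unfolding n_def using N by linarith
    then have "n * e \<ge> 2 * K" using e by (simp add: field_simps)
    then have Kn: "K / n \<le> e / 2" using n0 by (simp add: field_simps)
    define q where "q = N div m"
    define s where "s = N mod m"
    have Nqs: "N = s + q * m" unfolding q_def s_def by simp
    have sm: "s < m" unfolding s_def using mW(1) by simp
    define y where "y = (F ^^ (q * m)) x"
    have FN: "(F ^^ N) x = (F ^^ s) y" unfolding y_def by (subst Nqs) (simp add: funpow_add)
    define E where "E = (F ^^ N) x - x - real q *\<^sub>R W"
    have "E = ((F ^^ s) y - y) + (y - x - real q *\<^sub>R W)" unfolding E_def FN by simp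
    then have "norm E \<le> norm ((F ^^ s) y - y) + norm (y - x - real q *\<^sub>R W)"
      by (metis norm_triangle_ineq)
    also have "\<dots> \<le> real s * C1 + real q * ((e/2) * real m)"
      unfolding y_def by (intro add_mono funpow_disp funpow_mult_disp C1 mW)
    finally have nE: "norm E \<le> real s * C1 + real q * ((e/2) * real m)" .
    have nrel: "n = real s + real q * real m" unfolding n_def using Nqs by simp
    have "real s * C1 \<le> real m * C1" using sm C1 by (intro mult_right_mono) auto
    moreover have "real q * ((e/2) * real m) \<le> n * (e/2)" using nrel e by (simp add: algebra_simps)
    ultimately have "norm E \<le> real m * C1 + n * (e/2)" using nE by linarith
    then have t1: "norm ((1/n) *\<^sub>R E) \<le> (real m * C1) / n + e/2"
      using n0 by (simp add: field_simps)
    have t2: "norm ((1/n) *\<^sub>R x) \<le> 2 / n"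
      using fund_dom_norm[OF x] n0 by (simp add: field_simps)
    have mpos: "real m > 0" using mW(1) by simp
    have "real q / n - 1 / real m = - (real s / (n * real m))"
      using n0 mpos nrel by (simp add: field_simps)
    then have "\<bar>real q / n - 1 / real m\<bar> = real s / (n * real m)" using n0 mpos by simp
    also have "\<dots> \<le> 1 / n" using sm n0 mpos by (simp add: field_simps)
    finally have "\<bar>real q / n - 1 / real m\<bar> * norm W \<le> (1 / n) * norm W"
      by (intro mult_right_mono) auto
    then have t3: "norm ((real q / n - 1 / real m) *\<^sub>R W) \<le> norm W / n" by simp
    have decomp: "(1 / real N) *\<^sub>R (F ^^ N) x - (1 / real m) *\<^sub>R W
        = (1/n) *\<^sub>R E + (1/n) *\<^sub>R x + (real q / n - 1 / real m) *\<^sub>R W"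
      unfolding E_def n_def using n0 by (simp add: algebra_simps n_def)
    have "norm ((1 / real N) *\<^sub>R (F ^^ N) x - (1 / real m) *\<^sub>R W)
        \<le> norm ((1/n) *\<^sub>R E) + norm ((1/n) *\<^sub>R x) + norm ((real q / n - 1 / real m) *\<^sub>R W)"
      unfolding decomp
      using norm_triangle_ineq[of "(1/n) *\<^sub>R E + (1/n) *\<^sub>R x" "(real q / n - 1 / real m) *\<^sub>R W"]
        norm_triangle_ineq[of "(1/n) *\<^sub>R E" "(1/n) *\<^sub>R x"] by linarith
    also have "\<dots> \<le> (real m * C1) / n + e/2 + 2 / n + norm W / n"
      using t1 t2 t3 by linarith
    also have "\<dots> = K / n + e / 2" unfolding K_def by (simp add: add_divide_distrib)
    also have "\<dots> \<le> e" using Kn by linarith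
    finally show "norm ((1 / real N) *\<^sub>R (F ^^ N) x - (1 / real m) *\<^sub>R W) \<le> e" .
  qed
qed


lemma rot_set_singleton:
  fixes F :: "real^2 \<Rightarrow> real^2"
  assumes cont: "continuous_on UNIV F" and eqv: "\<And>x k. k \<in> lattice \<Longrightarrow> F (x + k) = F x + k"
    and cond: "\<forall>\<epsilon>>0. \<exists>m\<ge>1. \<exists>W. \<forall>x. norm ((F ^^ m) x - x - W) \<le> \<epsilon> * real m"
  shows "\<exists>v. rotation_set F = {v}"
proof -
  define a where "a N = (1 / real N) *\<^sub>R (F ^^ N) 0" for N
  have "Cauchy a"
  proof (rule metric_CauchyI)
    fix e :: real assume e: "e > 0"
    obtain w N0 where w: "\<forall>N\<ge>N0. \<forall>x\<in>fund_dom. norm ((1 / real N) *\<^sub>R (F ^^ N) x - w) \<le> e/3"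
      using approx_w[OF cont eqv cond, of "e/3"] e by auto
    have "\<forall>m\<ge>N0. \<forall>n\<ge>N0. dist (a m) (a n) < e"
    proof (intro allI impI)
      fix m n assume mn: "m \<ge> N0" "n \<ge> N0"
      have "dist (a m) (a n) \<le> norm (a m - w) + norm (a n - w)"
        unfolding dist_norm using norm_triangle_ineq4[of "a m - w" "a n - w"] by simp
      also have "\<dots> \<le> e/3 + e/3" unfolding a_def using w mn fund_dom_ne by (intro add_mono) auto
      finally show "dist (a m) (a n) < e" using e by linarith
    qed
    then show "\<exists>M. \<forall>m\<ge>M. \<forall>n\<ge>M. dist (a m) (a n) < e" by blast
  qed
  then obtain v where av: "a \<longlonglongrightarrow> v" using Cauchy_convergent convergent_def by blast
  have key: "\<exists>N0. \<forall>N\<ge>N0. \<forall>x\<in>fund_dom. norm ((1 / real N) *\<^sub>R (F ^^ N) x - v) \<le> e" if e: "e > 0" for e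
  proof -
    obtain w N0 where w: "\<forall>N\<ge>N0. \<forall>x\<in>fund_dom. norm ((1 / real N) *\<^sub>R (F ^^ N) x - w) \<le> e/2"
      using approx_w[OF cont eqv cond, of "e/2"] e by auto
    have "(\<lambda>N. norm (a N - w)) \<longlonglongrightarrow> norm (v - w)"
      by (intro tendsto_norm tendsto_diff av tendsto_const)
    moreover have "\<forall>N\<ge>N0. norm (a N - w) \<le> e/2" unfolding a_def using w fund_dom_ne by auto
    ultimately have vw: "norm (v - w) \<le> e/2" by (rule Lim_bounded)
    have "norm ((1 / real N) *\<^sub>R (F ^^ N) x - v) \<le> e" if "N \<ge> N0" "x \<in> fund_dom" for N x
    proof -
      have "norm ((1 / real N) *\<^sub>R (F ^^ N) x - v) \<le> norm ((1 / real N) *\<^sub>R (F ^^ N) x - w) + norm (v - w)"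
        using norm_triangle_ineq4[of "(1 / real N) *\<^sub>R (F ^^ N) x - w" "v - w"] by simp
      then show ?thesis using w that vw by fastforce
    qed
    then show ?thesis by blast
  qed
  define A where "A N = (\<lambda>x. (1 / real N) *\<^sub>R x) ` ((F ^^ N) ` fund_dom)" for N
  have Ane: "A N \<noteq> {}" for N unfolding A_def using fund_dom_ne by blast
  have Amem: "(1 / real N) *\<^sub>R (F ^^ N) x \<in> A N" if "x \<in> fund_dom" for N x
    unfolding A_def using that by blast
  have Aall: "\<exists>x\<in>fund_dom. y = (1 / real N) *\<^sub>R (F ^^ N) x" if "y \<in> A N" for y N
    using that unfolding A_def by blast
  have hd_eq: "hausdorff_dist (A N) {v} = max (SUP y\<in>A N. dist y v) (infdist v (A N))" for N
    by (simp add: hausdorff_dist_def)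
  have lim: "(\<lambda>N. hausdorff_dist (A N) {v}) \<longlonglongrightarrow> 0"
    unfolding LIMSEQ_iff
  proof (intro allI impI)
    fix r :: real assume r: "r > 0"
    obtain N0 where N0: "\<forall>N\<ge>N0. \<forall>x\<in>fund_dom. norm ((1 / real N) *\<^sub>R (F ^^ N) x - v) \<le> r/2"
      using key[of "r/2"] r by auto
    have "norm (hausdorff_dist (A N) {v} - 0) < r" if N: "N \<ge> N0" for N
    proof -
      have s1: "(SUP y\<in>A N. dist y v) \<le> r/2"
      proof (rule cSUP_least[OF Ane])
        fix y assume "y \<in> A N"
        then obtain x where "x \<in> fund_dom" "y = (1 / real N) *\<^sub>R (F ^^ N) x" using Aall by blast
        then show "dist y v \<le> r/2" using N0 N by (simp add: dist_norm)
      qed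
      have s2: "infdist v (A N) \<le> r/2"
      proof -
        have "infdist v (A N) \<le> dist v ((1 / real N) *\<^sub>R (F ^^ N) 0)"
          by (rule infdist_le[OF Amem[OF fund_dom_ne]])
        also have "\<dots> \<le> r/2" using N0 N fund_dom_ne by (simp add: dist_norm norm_minus_commute)
        finally show ?thesis .
      qed
      have "0 \<le> infdist v (A N)" by (rule infdist_nonneg)
      then show ?thesis unfolding hd_eq using s1 s2 r by auto
    qed
    then show "\<exists>no. \<forall>n\<ge>no. norm (hausdorff_dist (A n) {v} - 0) < r" by blast
  qed
  have uniq: "R = {v}" if R: "compact R" "R \<noteq> {}" "(\<lambda>N. hausdorff_dist (A N) R) \<longlonglongrightarrow> 0" for R
  proof -
    have "r0 = v" if r0: "r0 \<in> R" for r0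
    proof (rule ccontr)
      assume "r0 \<noteq> v"
      define d where "d = dist r0 v"
      have d: "d > 0" unfolding d_def using \<open>r0 \<noteq> v\<close> by simp
      obtain N0 where N0: "\<forall>N\<ge>N0. \<forall>x\<in>fund_dom. norm ((1 / real N) *\<^sub>R (F ^^ N) x - v) \<le> d/3"
        using key[of "d/3"] d by auto
      obtain N1 where N1: "\<forall>N\<ge>N1. norm (hausdorff_dist (A N) R - 0) < d/3"
        using R(3)[unfolded LIMSEQ_iff] d by (meson divide_pos_pos zero_less_numeral)
      define N where "N = max N0 N1"
      have "norm (hausdorff_dist (A N) R - 0) < d/3" using N1 unfolding N_def by simp
      then have hsmall: "hausdorff_dist (A N) R < d/3" by simp
      obtain B where B: "\<forall>b\<in>R. norm b \<le> B" using compact_imp_bounded[OF R(1)] bounded_iff by metis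
      define a0 where "a0 = (1 / real N) *\<^sub>R (F ^^ N) 0"
      have a0: "a0 \<in> A N" unfolding a0_def by (rule Amem[OF fund_dom_ne])
      have "bdd_above ((\<lambda>b. infdist b (A N)) ` R)"
      proof (rule bdd_aboveI2)
        fix b assume "b \<in> R"
        have "infdist b (A N) \<le> dist b a0" by (rule infdist_le[OF a0])
        also have "\<dots> \<le> norm b + norm a0" unfolding dist_norm by (rule norm_triangle_ineq4)
        finally show "infdist b (A N) \<le> B + norm a0" using B \<open>b \<in> R\<close> by fastforce
      qed
      then have "infdist r0 (A N) \<le> (SUP b\<in>R. infdist b (A N))" by (rule cSUP_upper[OF r0])
      also have "\<dots> \<le> hausdorff_dist (A N) R" unfolding hausdorff_dist_def by simp
      finally have h1: "infdist r0 (A N) < d/3" using hsmall by linarith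
      have "d - d/3 \<le> infdist r0 (A N)"
        unfolding infdist_notempty[OF Ane]
      proof (rule cINF_greatest[OF Ane])
        fix y assume "y \<in> A N"
        then obtain x where x: "x \<in> fund_dom" "y = (1 / real N) *\<^sub>R (F ^^ N) x" using Aall by blast
        have "dist y v \<le> d/3" using N0 x unfolding N_def by (simp add: dist_norm)
        moreover have "d \<le> dist r0 y + dist y v" unfolding d_def by (rule dist_triangle)
        ultimately show "d - d/3 \<le> dist r0 y" by linarith
      qed
      then show False using h1 d by linarith
    qed
    then show ?thesis using R(2) by blast
  qed
  have "rotation_set F = {v}"
    unfolding rotation_set_def
  proof (rule the_equality)
    show "compact {v} \<and> {v} \<noteq> {} \<and>
      (\<lambda>n. hausdorff_dist ((\<lambda>x. (1 / real n) *\<^sub>R x) ` ((F ^^ n) ` fund_dom)) {v}) \<longlonglongrightarrow> 0"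
      using lim unfolding A_def by simp
    fix R assume "compact R \<and> R \<noteq> {} \<and>
      (\<lambda>n. hausdorff_dist ((\<lambda>x. (1 / real n) *\<^sub>R x) ` ((F ^^ n) ` fund_dom)) R) \<longlonglongrightarrow> 0"
    then show "R = {v}" using uniq unfolding A_def by blast
  qed
  then show ?thesis by blast
qed


lemma tdist_set_ne: "{norm (x - y) | x y. proj x = p \<and> proj y = q} \<noteq> {}"
  using proj_Rep by blast

lemma tdist_nonneg: "0 \<le> tdist p q"
  unfolding tdist_def by (rule cInf_greatest[OF tdist_set_ne]) auto

lemma tdist_le4: "tdist p q \<le> 4"
proof -
  have "tdist p q \<le> norm (Rep_torus p - Rep_torus q)"
    unfolding tdist_def
    by (rule cInf_lower) (use proj_Rep in \<open>blast\<close>, auto intro!: bdd_belowI[of _ 0])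
  also have "\<dots> \<le> norm (Rep_torus p) + norm (Rep_torus q)" by (rule norm_triangle_ineq4)
  also have "\<dots> \<le> 4" using norm_Rep_le[of p] norm_Rep_le[of q] by linarith
  finally show ?thesis .
qed

lemma tdist_less: assumes "tdist p q < r"
  shows "\<exists>x y. proj x = p \<and> proj y = q \<and> norm (x - y) < r"
proof -
  obtain z where "z \<in> {norm (x - y) | x y. proj x = p \<and> proj y = q}" "z < r"
    using cInf_lessD[OF tdist_set_ne assms[unfolded tdist_def]] by blast
  then show ?thesis by blast
qed

lemma dinf_C0:
  assumes "dinf g f < r" "r \<le> 1"
  shows "tdist (g p) (f p) < r"
proof -
  define C0 where "C0 = Sup (range (\<lambda>p. tdist (g p) (f p)))"
  have bddC: "bdd_above (range (\<lambda>p. tdist (g p) (f p)))"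
    by (rule bdd_aboveI2[of _ _ 4]) (rule tdist_le4)
  have tC: "tdist (g p) (f p) \<le> C0" for p
    unfolding C0_def by (rule cSUP_upper[OF _ bddC]) simp
  have C0nn: "C0 \<ge> 0" using tC[of p] tdist_nonneg[of "g p" "f p"] by linarith
  have dkC: "C0 \<le> dk k g f" for k
  proof -
    define D where "D = {Sup (range (\<lambda>x. norm (pd ds (lift g) x - pd ds (lift f) x))) | ds.
          1 \<le> length ds \<and> length ds \<le> k}"
    have "D \<subseteq> (\<lambda>ds. Sup (range (\<lambda>x. norm (pd ds (lift g) x - pd ds (lift f) x)))) `
        {ds. set ds \<subseteq> UNIV \<and> length ds \<le> k}"
      unfolding D_def by auto
    moreover have "finite {ds :: 2 list. set ds \<subseteq> UNIV \<and> length ds \<le> k}"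
      by (rule finite_lists_length_le) simp
    ultimately have "finite D" by (meson finite_imageI finite_subset)
    then have "finite ({C0} \<union> D)" by simp
    then have "C0 \<le> Sup ({C0} \<union> D)"
      by (intro cSup_upper bdd_above_finite) auto
    then show ?thesis unfolding dk_def C0_def D_def by simp
  qed
  have dCkC: "C0 \<le> dCk k g f" for k
    unfolding dCk_def using dkC[of k] by linarith
  define t where "t k = (1/2::real) ^ k * min 1 (dCk k g f)" for k
  have t0: "0 \<le> t k" for k unfolding t_def using dCkC[of k] C0nn by simp
  have t1: "t k \<le> (1/2) ^ k" for k unfolding t_def by (simp add: mult_left_le)
  have summ: "summable t"
    by (rule summable_comparison_test[OF _ summable_geometric[of "1/2::real"]])
      (use t0 t1 in auto)
  have "sum t {0} \<le> suminf t"
    by (rule sum_le_suminf[OF summ]) (use t0 in auto)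
  then have "t 0 \<le> dinf g f" unfolding dinf_def t_def by simp
  moreover have "min 1 C0 \<le> t 0" unfolding t_def using dCkC[of 0] by simp
  ultimately have "min 1 C0 < r" using assms(1) by linarith
  then have "C0 < r" using assms(2) by linarith
  then show ?thesis using tC[of p] by linarith
qed


lemma smooth_cont: "smooth F \<Longrightarrow> continuous_on UNIV F"
  unfolding smooth_def using pd.simps(1)[of F] by metis

lemma Diff_lifts:
  assumes "h \<in> Diff"
  obtains H K where "continuous_on UNIV H" "is_lift H h" "continuous_on UNIV K" "is_lift K (inv h)"
  using assms unfolding Diff_def smooth_tmap_def by (auto dest: smooth_cont)

lemma rot_proj: "rot \<theta> (proj y) = proj (y + \<theta>)"
proof -
  have "Rep_torus (proj y) - y \<in> lattice"
    using proj_Rep[of "proj y"] by (simp add: proj_eq_iff)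
  then have "(Rep_torus (proj y) + \<theta>) - (y + \<theta>) \<in> lattice" by simp
  then show ?thesis unfolding rot_def by (simp add: proj_eq_iff)
qed

lemma cont_comp: "continuous_on UNIV f \<Longrightarrow> continuous_on UNIV g \<Longrightarrow> continuous_on UNIV (\<lambda>x. f (g x))"
  by (rule continuous_on_compose2[of UNIV f UNIV g]) auto

lemma conj_lift:
  assumes h: "h \<in> Diff"
  shows "\<exists>G. continuous_on UNIV G \<and> is_lift G (h \<circ> rot \<theta> \<circ> inv h) \<and>
    (\<forall>x k. k \<in> lattice \<longrightarrow> G (x + k) = G x + k) \<and>
    (\<forall>e>0. \<exists>\<delta>>0. \<forall>x y. dist x y < \<delta> \<longrightarrow> dist (G x) (G y) < e) \<and>
    (\<exists>C. \<forall>m\<ge>1. \<exists>W. \<forall>x. norm ((G ^^ m) x - x - W) \<le> C)"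
proof -
  obtain H K where H: "continuous_on UNIV H" "is_lift H h"
    and K: "continuous_on UNIV K" "is_lift K (inv h)"
    using Diff_lifts[OF h] by blast
  have bh: "bij h" using h unfolding Diff_def by simp
  have ih: "inv h (h z) = z" for z using bh by (simp add: bij_is_inj)
  have hi: "h (inv h z) = z" for z using bh by (simp add: bij_is_surj surj_f_inv_f)
  define G where "G x = H (K x + \<theta>)" for x
  have cG: "continuous_on UNIV G" unfolding G_def
    by (intro cont_comp[OF H(1)] continuous_on_add K(1) continuous_on_const)
  have lG: "is_lift G (h \<circ> rot \<theta> \<circ> inv h)"
    unfolding is_lift_def G_def
  proof
    fix x
    have "proj (H (K x + \<theta>)) = h (proj (K x + \<theta>))" using H(2) unfolding is_lift_def by simp
    also have "proj (K x + \<theta>) = rot \<theta> (proj (K x))" by (simp add: rot_proj)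
    also have "proj (K x) = inv h (proj x)" using K(2) unfolding is_lift_def by simp
    finally show "proj (H (K x + \<theta>)) = (h \<circ> rot \<theta> \<circ> inv h) (proj x)" by simp
  qed
  obtain c where c: "c \<in> lattice" "\<forall>y. K (H y) - y = c"
  proof -
    have "\<exists>c\<in>lattice. \<forall>y. K (H y) - y = c"
    proof (rule lattice_valued_const)
      show "continuous_on UNIV (\<lambda>y. K (H y) - y)"
        by (intro continuous_on_diff cont_comp[OF K(1) H(1)] continuous_on_id)
      show "K (H y) - y \<in> lattice" for y
        using H(2) K(2) ih unfolding is_lift_def by (simp add: proj_eq_iff[symmetric])
    qed
    then show ?thesis using that by blast
  qed
  obtain c2 where c2: "c2 \<in> lattice" "\<forall>x. H (K x) - x = c2"
  proof -
    have "\<exists>c\<in>lattice. \<forall>x. H (K x) - x = c"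
    proof (rule lattice_valued_const)
      show "continuous_on UNIV (\<lambda>y. H (K y) - y)"
        by (intro continuous_on_diff cont_comp[OF H(1) K(1)] continuous_on_id)
      show "H (K y) - y \<in> lattice" for y
        using H(2) K(2) hi unfolding is_lift_def by (simp add: proj_eq_iff[symmetric])
    qed
    then show ?thesis using that by blast
  qed
  have KH: "K (H y) = y + c" for y using c(2)[rule_format, of y] by (simp add: algebra_simps)
  have HK: "H (K x) = x + c2" for x using c2(2)[rule_format, of x] by (simp add: algebra_simps)
  have eqv: "G (x + k) = G x + k" if k: "k \<in> lattice" for x k
  proof -
    obtain l where l: "l \<in> lattice" "\<forall>y. K (y + k) = K y + l" using lift_transl[OF K k] by blast
    obtain l' where l': "l' \<in> lattice" "\<forall>y. H (y + l) = H y + l'" using lift_transl[OF H l(1)] by blast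
    have "x + k + c2 = H (K (x + k))" by (simp add: HK)
    also have "\<dots> = H (K x) + l'" using l l' by simp
    also have "\<dots> = x + c2 + l'" by (simp add: HK)
    finally have "l' = k" by simp
    have "G (x + k) = H (K x + l + \<theta>)" unfolding G_def using l by simp
    also have "\<dots> = H (K x + \<theta> + l)" by (simp add: algebra_simps)
    finally have "G (x + k) = H (K x + \<theta> + l)" .
    also have "\<dots> = G x + l'" unfolding G_def using l' by simp
    finally show ?thesis using \<open>l' = k\<close> by simp
  qed
  have ucont: "\<exists>\<delta>>0. \<forall>x y. dist x y < \<delta> \<longrightarrow> dist (G x) (G y) < e" if e: "e > 0" for e
  proof -
    have cp: "continuous_on UNIV (\<lambda>x. G x - x)" by (intro continuous_on_diff cG continuous_on_id)
    have pp: "G (x + k) - (x + k) = G x - x" if "k \<in> lattice" for x k using eqv[OF that] by simp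
    obtain d where d: "d > 0" "\<forall>x y. dist x y < d \<longrightarrow> dist (G x - x) (G y - y) < e/2"
      using periodic_ucont[OF cp pp, of "e/2"] e by auto
    show ?thesis
    proof (intro exI[of _ "min d (e/2)"] conjI allI impI)
      show "min d (e/2) > 0" using d e by simp
      fix x y :: "real^2" assume xy: "dist x y < min d (e/2)"
      have "G x - G y = (G x - x - (G y - y)) + (x - y)" by simp
      then have "dist (G x) (G y) \<le> dist (G x - x) (G y - y) + dist x y"
        unfolding dist_norm by (metis norm_triangle_ineq)
      then show "dist (G x) (G y) < e" using d xy by fastforce
    qed
  qed
  have trH: "\<exists>l. \<forall>y. H (y + j) = H y + l" if "j \<in> lattice" for j
    using lift_transl[OF H that] by blast
  obtain Cq where Cq: "\<forall>y u. norm (H (y + u) - H y - H u + H 0) \<le> Cq"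
    using Q_bounded[OF H(1) trH] by blast
  have iter: "\<exists>u. \<forall>x. (G ^^ m) x = H (K x + u)" if "m \<ge> 1" for m
    using that
  proof (induction m rule: dec_induct)
    case base then show ?case unfolding G_def by auto
  next
    case (step m)
    then obtain u where u: "\<forall>x. (G ^^ m) x = H (K x + u)" by blast
    have "(G ^^ Suc m) x = H (K x + (u + c + \<theta>))" for x
      using u by (simp add: G_def KH algebra_simps)
    then show ?case by blast
  qed
  have disp: "\<exists>W. \<forall>x. norm ((G ^^ m) x - x - W) \<le> Cq" if m1: "m \<ge> 1" for m
  proof -
    obtain u where u: "\<forall>x. (G ^^ m) x = H (K x + u)" using iter[OF m1] by blast
    have eq: "(G ^^ m) x - x - (c2 + H u - H 0) = H (K x + u) - H (K x) - H u + H 0" for x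
      using u HK[of x] by (simp add: algebra_simps)
    have "norm ((G ^^ m) x - x - (c2 + H u - H 0)) \<le> Cq" for x
      unfolding eq using Cq by blast
    then show ?thesis by blast
  qed
  show ?thesis
    using cG lG eqv ucont disp by blast
qed


lemma iter_close:
  fixes G :: "real^2 \<Rightarrow> real^2"
  assumes uc: "\<forall>e>0. \<exists>\<delta>>0. \<forall>x y. dist x y < \<delta> \<longrightarrow> dist (G x) (G y) < e"
  shows "\<tau> > 0 \<Longrightarrow> \<exists>\<eta>>0. \<forall>F. (\<forall>x. norm (F x - G x) \<le> \<eta>) \<longrightarrow> (\<forall>x. norm ((F ^^ m) x - (G ^^ m) x) \<le> \<tau>)"
proof (induction m arbitrary: \<tau>)
  case 0
  then show ?case by (intro exI[of _ 1]) auto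
next
  case (Suc m)
  obtain \<delta> where \<delta>: "\<delta> > 0" "\<forall>x y. dist x y < \<delta> \<longrightarrow> dist (G x) (G y) < \<tau>/2"
    using uc Suc.prems by (meson half_gt_zero)
  obtain \<eta>' where \<eta>': "\<eta>' > 0" "\<forall>F. (\<forall>x. norm (F x - G x) \<le> \<eta>') \<longrightarrow> (\<forall>x. norm ((F ^^ m) x - (G ^^ m) x) \<le> \<delta>/2)"
    using Suc.IH[of "\<delta>/2"] \<delta>(1) by auto
  show ?case
  proof (intro exI[of _ "min \<eta>' (\<tau>/2)"] conjI allI impI)
    show "min \<eta>' (\<tau>/2) > 0" using \<eta>'(1) Suc.prems by simp
    fix F :: "real^2 \<Rightarrow> real^2" and x
    assume F: "\<forall>x. norm (F x - G x) \<le> min \<eta>' (\<tau>/2)"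
    have "norm ((F ^^ m) x - (G ^^ m) x) \<le> \<delta>/2" using \<eta>'(2) F by auto
    then have "dist ((F ^^ m) x) ((G ^^ m) x) < \<delta>" using \<delta>(1) by (simp add: dist_norm)
    then have a: "norm (G ((F ^^ m) x) - G ((G ^^ m) x)) < \<tau>/2" using \<delta>(2) by (simp add: dist_norm)
    have b: "norm (F ((F ^^ m) x) - G ((F ^^ m) x)) \<le> \<tau>/2" using F by (meson min.boundedE)
    have "(F ^^ Suc m) x - (G ^^ Suc m) x = (F ((F ^^ m) x) - G ((F ^^ m) x)) + (G ((F ^^ m) x) - G ((G ^^ m) x))"
      by simp
    then have "norm ((F ^^ Suc m) x - (G ^^ Suc m) x) \<le> norm (F ((F ^^ m) x) - G ((F ^^ m) x)) + norm (G ((F ^^ m) x) - G ((G ^^ m) x))"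
      by (metis norm_triangle_ineq)
    then show "norm ((F ^^ Suc m) x - (G ^^ Suc m) x) \<le> \<tau>" using a b by linarith
  qed
qed

lemma funpow_shift:
  fixes F :: "real^2 \<Rightarrow> real^2"
  assumes eqv: "\<And>x k. k \<in> lattice \<Longrightarrow> F (x + k) = F x + k" and c: "c \<in> lattice"
  shows "((\<lambda>z. F z - c) ^^ n) x = (F ^^ n) x - real n *\<^sub>R c"
proof (induction n)
  case 0 then show ?case by simp
next
  case (Suc n)
  have l: "- (real n *\<^sub>R c) \<in> lattice" using c by auto
  have "((\<lambda>z. F z - c) ^^ Suc n) x = F ((F ^^ n) x + - (real n *\<^sub>R c)) - c"
    using Suc by simp
  also have "\<dots> = F ((F ^^ n) x) - real n *\<^sub>R c - c" using eqv[OF l] by simp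
  finally show ?case by (simp add: algebra_simps)
qed


definition good :: "real \<Rightarrow> (torus \<Rightarrow> torus) \<Rightarrow> bool" where
  "good e f \<longleftrightarrow> (\<forall>F. continuous_on UNIV F \<and> is_lift F f \<longrightarrow>
     (\<forall>x k. k \<in> lattice \<longrightarrow> F (x + k) = F x + k) \<and>
     (\<exists>m\<ge>1. \<exists>W. \<forall>x. norm ((F ^^ m) x - x - W) \<le> e * real m))"

lemma near_orbit:
  assumes h: "h \<in> Diff" and e: "e > 0"
  shows "\<exists>r>0. \<forall>f. (\<forall>p. tdist ((h \<circ> rot \<theta> \<circ> inv h) p) (f p) < r) \<longrightarrow> good e f"
proof -
  define g where "g = h \<circ> rot \<theta> \<circ> inv h"
  obtain G C where cG: "continuous_on UNIV G" and lG: "is_lift G g"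
    and eqG: "\<forall>x k. k \<in> lattice \<longrightarrow> G (x + k) = G x + k"
    and ucG: "\<forall>e>0. \<exists>\<delta>>0. \<forall>x y. dist x y < \<delta> \<longrightarrow> dist (G x) (G y) < e"
    and dG: "\<forall>m\<ge>1. \<exists>W. \<forall>x. norm ((G ^^ m) x - x - W) \<le> C"
    using conj_lift[OF h, of \<theta>] unfolding g_def by blast
  define m where "m = nat \<lceil>2 * max C 0 / e\<rceil> + 1"
  have m1: "m \<ge> 1" unfolding m_def by simp
  have "real m \<ge> 2 * max C 0 / e" unfolding m_def by linarith
  then have "e * real m \<ge> 2 * max C 0" using e by (simp add: field_simps)
  then have Cm: "C \<le> e * real m / 2" by linarith
  obtain W0 where W0: "\<forall>x. norm ((G ^^ m) x - x - W0) \<le> C" using dG m1 by blast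
  have tpos: "e * real m / 2 > 0" using e m1 by simp
  obtain \<eta> where \<eta>: "\<eta> > 0" "\<forall>F. (\<forall>x. norm (F x - G x) \<le> \<eta>) \<longrightarrow> (\<forall>x. norm ((F ^^ m) x - (G ^^ m) x) \<le> e * real m / 2)"
    using iter_close[OF ucG tpos] by blast
  define r where "r = min \<eta> (1/4)"
  have r: "r > 0" "r \<le> \<eta>" "r \<le> 1/4" unfolding r_def using \<eta> by auto
  have "good e f" if df: "\<forall>p. tdist (g p) (f p) < r" for f
    unfolding good_def
  proof (intro allI impI)
    fix F assume F: "continuous_on UNIV F \<and> is_lift F f"
    have td: "tdist (g p) (f p) < r" for p using df by blast
    have near: "\<exists>k\<in>lattice. norm ((F z - G z) - k) < r" for z
    proof -
      obtain x y where xy: "proj x = g (proj z)" "proj y = f (proj z)" "norm (x - y) < r"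
        using tdist_less[OF td[of "proj z"]] by blast
      have "G z - x \<in> lattice" using lG xy(1) unfolding is_lift_def by (simp add: proj_eq_iff[symmetric])
      moreover have "F z - y \<in> lattice" using F xy(2) unfolding is_lift_def by (simp add: proj_eq_iff[symmetric])
      ultimately have "(F z - y) - (G z - x) \<in> lattice" by auto
      moreover have "norm ((F z - G z) - ((F z - y) - (G z - x))) < r"
        using xy(3) by (simp add: norm_minus_commute algebra_simps)
      ultimately show ?thesis by blast
    qed
    obtain c where c: "c \<in> lattice" "\<forall>z. norm ((F z - G z) - c) < r"
      using lattice_const[of "\<lambda>z. F z - G z" r] near F cG r(3)
      by (auto intro: continuous_on_diff)
    define F' where "F' z = F z - c" for z
    have F'G: "norm (F' z - G z) < r" for z using c(2) unfolding F'_def by (simp add: algebra_simps)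
    have eqF: "F (x + k) = F x + k" if k: "k \<in> lattice" for x k
    proof -
      have "F (x + k) - F x \<in> lattice"
        using F by (intro lift_diff_lattice) (auto simp: proj_add_lattice k)
      then have L: "F (x + k) - F x - k \<in> lattice" using k by auto
      have "F (x + k) - F x - k = (F' (x + k) - G (x + k)) - (F' x - G x)"
        unfolding F'_def using eqG[rule_format, OF k, of x] by (simp add: algebra_simps)
      then have "norm (F (x + k) - F x - k) \<le> norm (F' (x + k) - G (x + k)) + norm (F' x - G x)"
        by (metis norm_triangle_ineq4)
      then have "norm (F (x + k) - F x - k) < 1" using F'G[of "x + k"] F'G[of x] r(3) by linarith
      then have "F (x + k) - F x - k = 0" using lattice_small_zero L by blast
      then show ?thesis by (simp add: algebra_simps)
    qed
    have close: "norm ((F' ^^ m) x - (G ^^ m) x) \<le> e * real m / 2" for x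
      using \<eta>(2) F'G r(2) by (meson less_imp_le order_trans)
    have Fm: "(F' ^^ m) x = (F ^^ m) x - real m *\<^sub>R c" for x
      unfolding F'_def[abs_def] by (rule funpow_shift[OF eqF c(1)])
    have "norm ((F ^^ m) x - x - (W0 + real m *\<^sub>R c)) \<le> e * real m" for x
    proof -
      have "(F ^^ m) x - x - (W0 + real m *\<^sub>R c) = ((F' ^^ m) x - (G ^^ m) x) + ((G ^^ m) x - x - W0)"
        using Fm[of x] by (simp add: algebra_simps)
      then have "norm ((F ^^ m) x - x - (W0 + real m *\<^sub>R c)) \<le> norm ((F' ^^ m) x - (G ^^ m) x) + norm ((G ^^ m) x - x - W0)"
        by (metis norm_triangle_ineq)
      then show ?thesis using close[of x] W0[rule_format, of x] Cm by linarith
    qed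
    then show "(\<forall>x k. k \<in> lattice \<longrightarrow> F (x + k) = F x + k) \<and>
        (\<exists>m\<ge>1. \<exists>W. \<forall>x. norm ((F ^^ m) x - x - W) \<le> e * real m)"
      using eqF m1 by blast
  qed
  then show ?thesis using r(1) unfolding g_def by blast
qed


lemma tdist_refl: "tdist p p = 0"
proof -
  have "tdist p p \<le> norm (Rep_torus p - Rep_torus p)"
    unfolding tdist_def
    by (rule cInf_lower) (use proj_Rep in \<open>blast\<close>, auto intro!: bdd_belowI[of _ 0])
  then show ?thesis using tdist_nonneg[of p p] by simp
qed

lemma tdist_triangle: "tdist a c \<le> tdist a b + tdist b c"
proof (rule field_le_epsilon)
  fix \<epsilon> :: real assume \<epsilon>: "\<epsilon> > 0"
  obtain x y where xy: "proj x = a" "proj y = b" "norm (x - y) < tdist a b + \<epsilon>/2"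
    using tdist_less[of a b "tdist a b + \<epsilon>/2"] \<epsilon> by auto
  obtain y' z where yz: "proj y' = b" "proj z = c" "norm (y' - z) < tdist b c + \<epsilon>/2"
    using tdist_less[of b c "tdist b c + \<epsilon>/2"] \<epsilon> by auto
  have k: "y - y' \<in> lattice" using xy(2) yz(1) by (simp add: proj_eq_iff[symmetric])
  have pz: "proj (z + (y - y')) = c" using yz(2) k by (simp add: proj_add_lattice)
  have "tdist a c \<le> norm (x - (z + (y - y')))"
    unfolding tdist_def
    by (rule cInf_lower) (use xy(1) pz in \<open>blast\<close>, auto intro!: bdd_belowI[of _ 0])
  also have "x - (z + (y - y')) = (x - y) + (y' - z)" by (simp add: algebra_simps)
  also have "norm \<dots> \<le> norm (x - y) + norm (y' - z)" by (rule norm_triangle_ineq)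
  finally show "tdist a c \<le> tdist a b + tdist b c + \<epsilon>" using xy(3) yz(3) by linarith
qed

lemma openin_Diff_top: "openin Diff_top U \<longleftrightarrow> dinf_open U"
  unfolding Diff_top_def by (simp add: istopology_dinf_open)

lemma topspace_Diff_top: "topspace Diff_top = Diff"
proof -
  have "dinf_open Diff" unfolding dinf_open_def by (auto intro: exI[of _ 1])
  then have "Diff \<subseteq> topspace Diff_top" using openin_subset openin_Diff_top by blast
  moreover have "topspace Diff_top \<subseteq> Diff"
    unfolding topspace_def openin_Diff_top dinf_open_def by blast
  ultimately show ?thesis by blast
qed

lemma C0_ball_open:
  assumes r: "r > 0"
  shows "openin Diff_top {f \<in> Diff. Sup (range (\<lambda>p. tdist (g p) (f p))) < r}"
  unfolding openin_Diff_top dinf_open_def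
proof (intro conjI ballI)
  show "{f \<in> Diff. Sup (range (\<lambda>p. tdist (g p) (f p))) < r} \<subseteq> Diff" by blast
next
  fix f assume f: "f \<in> {f \<in> Diff. Sup (range (\<lambda>p. tdist (g p) (f p))) < r}"
  define C where "C = Sup (range (\<lambda>p. tdist (g p) (f p)))"
  have C: "C < r" using f unfolding C_def by simp
  have bdd: "bdd_above (range (\<lambda>p. tdist (g p) (f p)))"
    by (rule bdd_aboveI2[of _ _ 4]) (rule tdist_le4)
  have tC: "tdist (g p) (f p) \<le> C" for p unfolding C_def by (rule cSUP_upper[OF _ bdd]) simp
  define s where "s = min ((r - C)/2) 1"
  show "\<exists>s>0. \<forall>f'\<in>Diff. dinf f f' < s \<longrightarrow> f' \<in> {f \<in> Diff. Sup (range (\<lambda>p. tdist (g p) (f p))) < r}"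
  proof (intro exI[of _ s] conjI ballI impI)
    show "s > 0" unfolding s_def using C by simp
    fix f' assume f': "f' \<in> Diff" "dinf f f' < s"
    have ts: "tdist (f p) (f' p) < s" for p by (rule dinf_C0[OF f'(2)]) (simp add: s_def)
    have "tdist (g p) (f' p) \<le> C + s" for p
      using tdist_triangle[where a="g p" and b="f p" and c="f' p"] tC[of p] ts[of p] by linarith
    then have "Sup (range (\<lambda>p. tdist (g p) (f' p))) \<le> C + s"
      by (intro cSUP_least) auto
    also have "C + s < r"
    proof -
      have "s \<le> (r - C)/2" unfolding s_def by (rule min.cobounded1)
      then have "C + s \<le> C + (r - C)/2" by (rule add_left_mono)
      also have "\<dots> < r" using C by (simp add: field_simps)
      finally show ?thesis .
    qed
    finally show "f' \<in> {f \<in> Diff. Sup (range (\<lambda>p. tdist (g p) (f p))) < r}" using f' by simp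
  qed
qed

lemma generic_orbit:
  assumes S: "S \<subseteq> Diff"
  shows "generic_in (subtopology Diff_top (Diff_top closure_of {h \<circ> rot \<theta> \<circ> inv h | h \<theta>. h \<in> S}))
           pseudo_rotation"
proof -
  define Orb where "Orb = {h \<circ> rot \<theta> \<circ> inv h | h \<theta>. h \<in> S}"
  define X where "X = Diff_top"
  define T where "T = X closure_of Orb"
  define P where "P n = {f. good (1 / (real n + 1)) f}" for n :: nat
  define U where "U n = T \<inter> (X interior_of P n)" for n
  have TX: "T \<subseteq> Diff"
    using closure_of_subset_topspace[of Diff_top Orb] unfolding T_def X_def topspace_Diff_top .
  have orbP: "Diff \<inter> Orb \<subseteq> X interior_of P n" for n
  proof
    fix g assume g: "g \<in> Diff \<inter> Orb"
    then obtain h \<theta> where h: "h \<in> S" "g = h \<circ> rot \<theta> \<circ> inv h" unfolding Orb_def by blast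
    have e: "1 / (real n + 1) > 0" by simp
    obtain r where r: "r > 0" "\<forall>f. (\<forall>p. tdist (g p) (f p) < r) \<longrightarrow> good (1 / (real n + 1)) f"
      using near_orbit[OF _ e, of h \<theta>] h S by blast
    define V where "V = {f \<in> Diff. Sup (range (\<lambda>p. tdist (g p) (f p))) < r}"
    have oV: "openin X V" unfolding V_def X_def by (rule C0_ball_open[OF r(1)])
    have gV: "g \<in> V" unfolding V_def using g r(1) by (simp add: tdist_refl)
    have "V \<subseteq> P n"
    proof
      fix f assume f: "f \<in> V"
      have bdd: "bdd_above (range (\<lambda>p. tdist (g p) (f p)))"
        by (rule bdd_aboveI2[of _ _ 4]) (rule tdist_le4)
      have "tdist (g p) (f p) < r" for p
        using cSUP_upper[OF _ bdd, of p] f unfolding V_def by fastforce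
      then show "f \<in> P n" unfolding P_def using r(2) by blast
    qed
    then show "g \<in> X interior_of P n" using interior_of_maximal[OF _ oV] gV by blast
  qed
  have DO_T: "Diff \<inter> Orb \<subseteq> T"
  proof -
    have "Diff \<inter> Orb \<subseteq> X closure_of (Diff \<inter> Orb)"
      by (rule closure_of_subset) (simp add: X_def topspace_Diff_top)
    also have "\<dots> \<subseteq> T" unfolding T_def by (rule closure_of_mono) blast
    finally show ?thesis .
  qed
  have openU: "openin (subtopology X T) (U n)" for n
    unfolding openin_subtopology U_def by (intro exI[of _ "X interior_of P n"]) auto
  have denseU: "(subtopology X T) closure_of (U n) = topspace (subtopology X T)" for n
  proof -
    have "T = X closure_of (Diff \<inter> Orb)"
      unfolding T_def using closure_of_restrict[of X Orb] by (simp add: X_def topspace_Diff_top)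
    also have "\<dots> \<subseteq> X closure_of (U n)"
      by (rule closure_of_mono) (use orbP DO_T in \<open>auto simp: U_def\<close>)
    finally have "T \<subseteq> X closure_of (U n)" .
    moreover have "U n \<subseteq> T" unfolding U_def by blast
    ultimately have "(subtopology X T) closure_of (U n) = T"
    proof -
      assume a: "T \<subseteq> X closure_of (U n)" and b: "U n \<subseteq> T"
      have "T \<inter> U n = U n" using b by blast
      then have "(subtopology X T) closure_of (U n) = T \<inter> X closure_of (U n)"
        by (simp only: closure_of_subtopology)
      also have "\<dots> = T" using a by blast
      finally show ?thesis .
    qed
    then show ?thesis using TX by (auto simp: X_def topspace_Diff_top)
  qed
  have inter: "(\<Inter>n. U n) \<subseteq> {f. pseudo_rotation f}"
  proof
    fix f assume f: "f \<in> (\<Inter>n. U n)"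
    then have fD: "f \<in> Diff" using TX unfolding U_def by blast
    have gd: "good (1 / (real n + 1)) f" for n
      using f interior_of_subset[of X "P n"] unfolding U_def P_def by blast
    obtain F K where F: "continuous_on UNIV F" "is_lift F f"
      using Diff_lifts[OF fD] by blast
    have eqv: "F (x + k) = F x + k" if "k \<in> lattice" for x k
      using gd[of 0] F that unfolding good_def by blast
    have cond: "\<forall>\<epsilon>>0. \<exists>m\<ge>1. \<exists>W. \<forall>x. norm ((F ^^ m) x - x - W) \<le> \<epsilon> * real m"
    proof (intro allI impI)
      fix \<epsilon> :: real assume \<epsilon>: "\<epsilon> > 0"
      obtain n where n: "inverse (real (Suc n)) < \<epsilon>" using reals_Archimedean[OF \<epsilon>] by blast
      have n': "1 / (real n + 1) \<le> \<epsilon>" using n by (simp add: inverse_eq_divide add.commute)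
      obtain m W where mW: "m \<ge> 1" "\<forall>x. norm ((F ^^ m) x - x - W) \<le> 1 / (real n + 1) * real m"
        using gd[of n] F unfolding good_def by blast
      have "1 / (real n + 1) * real m \<le> \<epsilon> * real m" using n' by (intro mult_right_mono) auto
      then show "\<exists>m\<ge>1. \<exists>W. \<forall>x. norm ((F ^^ m) x - x - W) \<le> \<epsilon> * real m"
        using mW by (meson order_trans)
    qed
    obtain v where "rotation_set F = {v}" using rot_set_singleton[OF F(1) eqv cond] by blast
    moreover have "bij f" using fD unfolding Diff_def by simp
    ultimately show "f \<in> {f. pseudo_rotation f}"
      unfolding pseudo_rotation_def using F eqv by blast
  qed
  have "generic_in (subtopology X T) pseudo_rotation"
    unfolding generic_in_def
    by (rule exI[of _ U]) (use openU denseU inter in simp)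
  then show ?thesis unfolding X_def T_def Orb_def .
qed

theorem mainTheorem3:
  shows "generic_in (subtopology Diff_top O_closure) pseudo_rotation \<and>
         generic_in (subtopology Diff_top O_mu_closure) pseudo_rotation"
proof -
  have "Diff_mu \<subseteq> Diff" unfolding Diff_mu_def by blast
  then show ?thesis unfolding O_closure_def O_mu_closure_def
    using generic_orbit[OF order_refl] generic_orbit[of Diff_mu] by simp
qed

end
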